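(* $\mathbf{K4}^{\nabla\bullet}$ is strongly complete with respect to the class of transitive frames: for every set $\Gamma\cup\{\phi\}\subseteq\mathcal{L}(\nabla,\bullet)$, if for every Kripke model $\mathcal{M}$ with transitive accessibility relation and every state $s$, $\mathcal{M},s\vDash\Gamma$ implies $\mathcal{M},s\vDash\phi$, then $\Gamma\vdash_{\mathbf{K4}^{\nabla\bullet}}\phi$.
   Context: $\mathcal{L}(\nabla,\bullet)$: $\phi::=p\mid\neg\phi\mid\phi\land\phi\mid\nabla\phi\mid\bullet\phi$ over a nonempty set $\mathbf{P}$ of propositional variables; $\Delta\phi:=\neg\nabla\phi$, $\circ\phi:=\neg\bullet\phi$. Kripke models $\langle S,R,V\rangle$: $s\vDash\nabla\phi$ iff there are $t,u$ with $sRt$, $sRu$, $t\vDash\phi$, $u\nvDash\phi$; $s\vDash\bullet\phi$ iff $s\vDash\phi$ and there is $t$ with $sRt$, $t\nvDash\phi$. The Hilbert system $\mathbf{K}^{\nabla\bullet}$ has axioms: A0 all propositional tautologies; A1 $\bullet\phi\to\phi$; A2 $\nabla\phi\leftrightarrow\nabla\neg\phi$; A3 $\bullet(\psi\to\phi)\land\phi\to\bullet\phi$; A4 $\nabla(\phi\land\psi)\to\nabla\phi\vee\nabla\psi$; A5 $\bullet(\phi\land\psi)\to\bullet\phi\vee\bullet\psi$; A6 $\nabla\phi\to\bullet\phi\vee\bullet\neg\phi$; A7 $\bullet(\phi\to\psi)\land\bullet(\neg\phi\to\chi)\to\nabla\phi$; rules R1 $\phi/\Delta\phi$; R2 $\phi/\circ\phi$;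 R3 $\phi\leftrightarrow\psi/\Delta\phi\leftrightarrow\Delta\psi$; R4 $\phi\leftrightarrow\psi/\circ\phi\leftrightarrow\circ\psi$; MP. $\mathbf{K4}^{\nabla\bullet}$ adds the axiom schemas A4-1 $\Delta\phi\to\Delta\Delta\phi$; A4-2 $\Delta\phi\to\circ(\psi\to\Delta\phi)$; A4-3 $\bullet\psi_1\land\Delta\phi\land\circ(\neg\psi_1\to\phi)\to\Delta\circ(\neg\psi_2\to\phi)$; A4-4 $\bullet\psi_1\land\Delta\phi\land\circ(\neg\psi_1\to\phi)\to\circ(\neg\psi_1\to\circ(\neg\psi_2\to\phi))$. $\Gamma\vdash\phi$ means $\vdash(\gamma_1\land\dots\land\gamma_n)\to\phi$ for some finite subset of $\Gamma$. *)

theory Defs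
  imports Main
begin

datatype 'p form =
    Atom 'p
  | Neg "'p form"
  | Conj "'p form" "'p form"
  | Nabla "'p form"
  | Bullet "'p form"

definition Imp :: "'p form \<Rightarrow> 'p form \<Rightarrow> 'p form" where
  "Imp a b = Neg (Conj a (Neg b))"

definition Disj :: "'p form \<Rightarrow> 'p form \<Rightarrow> 'p form" where
  "Disj a b = Neg (Conj (Neg a) (Neg b))"

definition Iff :: "'p form \<Rightarrow> 'p form \<Rightarrow> 'p form" where
  "Iff a b = Conj (Imp a b) (Imp b a)"

definition Delta :: "'p form \<Rightarrow> 'p form" where
  "Delta a = Neg (Nabla a)"

definition Circ :: "'p form \<Rightarrow> 'p form" where
  "Circ a = Neg (Bullet a)"

fun sat :: "'s set \<Rightarrow> ('s \<Rightarrow> 's \<Rightarrow> bool) \<Rightarrow> ('p \<Rightarrow> 's set) \<Rightarrow> 's \<Rightarrow> 'p form \<Rightarrow> bool" where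
  "sat S R V s (Atom p) = (s \<in> V p)"
| "sat S R V s (Neg a) = (\<not> sat S R V s a)"
| "sat S R V s (Conj a b) = (sat S R V s a \<and> sat S R V s b)"
| "sat S R V s (Nabla a) =
     (\<exists>t\<in>S. \<exists>u\<in>S. R s t \<and> R s u \<and> sat S R V t a \<and> \<not> sat S R V u a)"
| "sat S R V s (Bullet a) =
     (sat S R V s a \<and> (\<exists>t\<in>S. R s t \<and> \<not> sat S R V t a))"

definition is_model :: "'s set \<Rightarrow> ('s \<Rightarrow> 's \<Rightarrow> bool) \<Rightarrow> ('p \<Rightarrow> 's set) \<Rightarrow> bool" where
  "is_model S R V \<longleftrightarrow> S \<noteq> {} \<and> (\<forall>s t. R s t \<longrightarrow> s \<in> S \<and> t \<in> S) \<and> (\<forall>p. V p \<subseteq> S)"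

definition transitive_rel :: "'s set \<Rightarrow> ('s \<Rightarrow> 's \<Rightarrow> bool) \<Rightarrow> bool" where
  "transitive_rel S R \<longleftrightarrow> (\<forall>s\<in>S. \<forall>t\<in>S. \<forall>u\<in>S. R s t \<longrightarrow> R t u \<longrightarrow> R s u)"

fun peval :: "('p form \<Rightarrow> bool) \<Rightarrow> 'p form \<Rightarrow> bool" where
  "peval v (Atom p) = v (Atom p)"
| "peval v (Neg a) = (\<not> peval v a)"
| "peval v (Conj a b) = (peval v a \<and> peval v b)"
| "peval v (Nabla a) = v (Nabla a)"
| "peval v (Bullet a) = v (Bullet a)"

definition tautology :: "'p form \<Rightarrow> bool" where
  "tautology a \<longleftrightarrow> (\<forall>v. peval v a)"

inductive K4 :: "'p form \<Rightarrow> bool" where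
  A0: "tautology a \<Longrightarrow> K4 a"
| A1: "K4 (Imp (Bullet a) a)"
| A2: "K4 (Iff (Nabla a) (Nabla (Neg a)))"
| A3: "K4 (Imp (Conj (Bullet (Imp b a)) a) (Bullet a))"
| A4: "K4 (Imp (Nabla (Conj a b)) (Disj (Nabla a) (Nabla b)))"
| A5: "K4 (Imp (Bullet (Conj a b)) (Disj (Bullet a) (Bullet b)))"
| A6: "K4 (Imp (Nabla a) (Disj (Bullet a) (Bullet (Neg a))))"
| A7: "K4 (Imp (Conj (Bullet (Imp a b)) (Bullet (Imp (Neg a) c))) (Nabla a))"
| A4_1: "K4 (Imp (Delta a) (Delta (Delta a)))"
| A4_2: "K4 (Imp (Delta a) (Circ (Imp b (Delta a))))"
| A4_3: "K4 (Imp (Conj (Conj (Bullet b1) (Delta a)) (Circ (Imp (Neg b1) a)))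
                 (Delta (Circ (Imp (Neg b2) a))))"
| A4_4: "K4 (Imp (Conj (Conj (Bullet b1) (Delta a)) (Circ (Imp (Neg b1) a)))
                 (Circ (Imp (Neg b1) (Circ (Imp (Neg b2) a)))))"
| R1: "K4 a \<Longrightarrow> K4 (Delta a)"
| R2: "K4 a \<Longrightarrow> K4 (Circ a)"
| R3: "K4 (Iff a b) \<Longrightarrow> K4 (Iff (Delta a) (Delta b))"
| R4: "K4 (Iff a b) \<Longrightarrow> K4 (Iff (Circ a) (Circ b))"
| MP: "K4 (Imp a b) \<Longrightarrow> K4 a \<Longrightarrow> K4 b"

definition derives :: "'p form set \<Rightarrow> 'p form \<Rightarrow> bool" where
  "derives G a \<longleftrightarrow> K4 a \<or>
     (\<exists>g gs. set (g # gs) \<subseteq> G \<and> K4 (Imp (fold (\<lambda>x y. Conj y x) gs g) a))"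

end

theory Submission
  imports Defs
begin

definition top :: "'p form" where
  "top = Neg (Conj (Atom undefined) (Neg (Atom undefined)))"

fun conjL :: "'p form list \<Rightarrow> 'p form" where
  "conjL [] = top"
| "conjL (x # xs) = Conj x (conjL xs)"

lemma peval_conjL[simp]: "peval v (conjL L) = (\<forall>x\<in>set L. peval v x)"
  by (induct L) (auto simp: top_def)

lemma peval_fold[simp]: "peval v (fold (\<lambda>x y. Conj y x) gs g) = (peval v g \<and> (\<forall>x\<in>set gs. peval v x))"
  by (induct gs arbitrary: g) auto

definition cons :: "'p form set \<Rightarrow> bool" where
  "cons X \<longleftrightarrow> \<not> (\<exists>L. set L \<subseteq> X \<and> K4 (Neg (conjL L)))"

definition mcs :: "'p form set \<Rightarrow> bool" where
  "mcs X \<longleftrightarrow> cons X \<and> (\<forall>Y. cons Y \<longrightarrow> X \<subseteq> Y \<longrightarrow> Y = X)"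

lemmas tdefs = tautology_def Imp_def Iff_def Disj_def Delta_def Circ_def top_def

lemma K4_taut: "K4 a \<Longrightarrow> tautology (Imp a b) \<Longrightarrow> K4 b"
  by (metis K4.A0 K4.MP)

lemma K4_taut2: "K4 a \<Longrightarrow> K4 b \<Longrightarrow> tautology (Imp a (Imp b c)) \<Longrightarrow> K4 c"
  by (metis K4.A0 K4.MP)

lemma mcs_deriv:
  assumes m: "mcs M" and L: "set L \<subseteq> M" and d: "K4 (Imp (conjL L) c)"
  shows "c \<in> M"
proof (rule ccontr)
  assume c: "c \<notin> M"
  have "\<not> cons (insert c M)" using m c unfolding mcs_def by blast
  then obtain L2 where L2: "set L2 \<subseteq> insert c M" "K4 (Neg (conjL L2))"
    unfolding cons_def by blast
  define L3 where "L3 = filter (\<lambda>x. x \<noteq> c) L2"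
  have s3: "set L3 \<subseteq> M" using L2(1) unfolding L3_def by auto
  have "K4 (Neg (conjL (L3 @ L)))"
  proof (rule K4_taut2[OF L2(2) d])
    show "tautology (Imp (Neg (conjL L2)) (Imp (Imp (conjL L) c) (Neg (conjL (L3 @ L)))))"
      unfolding tdefs L3_def by auto
  qed
  moreover have "set (L3 @ L) \<subseteq> M" using s3 L by auto
  ultimately show False using m unfolding mcs_def cons_def by blast
qed

lemma mcs_taut: "mcs M \<Longrightarrow> set L \<subseteq> M \<Longrightarrow> tautology (Imp (conjL L) c) \<Longrightarrow> c \<in> M"
  using mcs_deriv K4.A0 by blast

lemma mcs_thm: "mcs M \<Longrightarrow> K4 c \<Longrightarrow> c \<in> M"
  by (rule mcs_deriv[of M "[]"]) (auto elim: K4_taut simp: tdefs)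

lemma mcs_neg: assumes m: "mcs M" shows "(Neg a \<in> M) = (a \<notin> M)"
proof
  assume "Neg a \<in> M"
  moreover have "K4 (Neg (conjL [a, Neg a]))" by (rule K4.A0) (auto simp: tdefs)
  ultimately show "a \<notin> M" using m unfolding mcs_def cons_def
    by (metis empty_set empty_subsetI insert_subset list.simps(15))
next
  assume a: "a \<notin> M"
  have "\<not> cons (insert a M)" using m a unfolding mcs_def by blast
  then obtain L2 where L2: "set L2 \<subseteq> insert a M" "K4 (Neg (conjL L2))"
    unfolding cons_def by blast
  define L3 where "L3 = filter (\<lambda>x. x \<noteq> a) L2"
  have s3: "set L3 \<subseteq> M" using L2(1) unfolding L3_def by auto
  have "K4 (Imp (conjL L3) (Neg a))"
    by (rule K4_taut[OF L2(2)]) (use L2(1) in \<open>auto simp: tdefs L3_def\<close>)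
  then show "Neg a \<in> M" using mcs_deriv[OF m s3] by blast
qed

lemma chain_list:
  assumes "set L \<subseteq> \<Union>C" "C \<noteq> {}" "\<forall>x\<in>C. \<forall>y\<in>C. x \<subseteq> y \<or> y \<subseteq> x"
  shows "\<exists>Y\<in>C. set L \<subseteq> Y"
  using assms
proof (induct L)
  case Nil then show ?case by auto
next
  case (Cons x L)
  then obtain Y where Y: "Y \<in> C" "set L \<subseteq> Y" by auto
  from Cons obtain Z where Z: "Z \<in> C" "x \<in> Z" by auto
  from Cons(4) Y Z have "Y \<subseteq> Z \<or> Z \<subseteq> Y" by blast
  then show ?case using Y Z by auto
qed

lemma lindenbaum: assumes "cons X" shows "\<exists>M. mcs M \<and> X \<subseteq> M"
proof -
  let ?A = "{Y. cons Y \<and> X \<subseteq> Y}"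
  have "\<exists>M\<in>?A. \<forall>Z\<in>?A. M \<subseteq> Z \<longrightarrow> Z = M"
  proof (rule subset_Zorn_nonempty)
    show "?A \<noteq> {}" using assms by auto
  next
    fix C assume C: "C \<noteq> {}" "subset.chain ?A C"
    then have ch: "C \<subseteq> ?A" "\<forall>x\<in>C. \<forall>y\<in>C. x \<subseteq> y \<or> y \<subseteq> x"
      unfolding subset.chain_def by (auto, blast)
    have "cons (\<Union>C)"
      unfolding cons_def
    proof
      assume "\<exists>L. set L \<subseteq> \<Union>C \<and> K4 (Neg (conjL L))"
      then obtain L where "set L \<subseteq> \<Union>C" "K4 (Neg (conjL L))" by blast
      with chain_list[OF _ C(1) ch(2)] obtain Y where "Y \<in> C" "set L \<subseteq> Y" by blast
      with ch(1) \<open>K4 (Neg (conjL L))\<close> show False unfolding cons_def by blast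
    qed
    then show "\<Union>C \<in> ?A" using C(1) ch(1) by auto
  qed
  then obtain M where "M \<in> ?A" "\<forall>Z\<in>?A. M \<subseteq> Z \<longrightarrow> Z = M" by blast
  then show ?thesis unfolding mcs_def
    by (intro exI[of _ M]) (auto dest: subset_trans)
qed


lemma circ_eq: "tautology (Iff a b) \<Longrightarrow> K4 (Iff (Circ a) (Circ b))"
  by (rule K4.R4, rule K4.A0)

lemma delta_eq: "tautology (Iff a b) \<Longrightarrow> K4 (Iff (Delta a) (Delta b))"
  by (rule K4.R3, rule K4.A0)

definition Rc :: "'p form set \<Rightarrow> 'p form set \<Rightarrow> bool" where
  "Rc G D \<longleftrightarrow> (\<exists>\<psi>. Bullet \<psi> \<in> G \<and>
      (\<forall>a. Delta a \<in> G \<longrightarrow> Circ (Imp (Neg \<psi>) a) \<in> G \<longrightarrow> a \<in> D))"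

lemma closure:
  assumes m: "mcs G"
  shows "set L \<subseteq> {a. Delta a \<in> G \<and> Circ (Imp (Neg \<psi>) a) \<in> G} \<Longrightarrow>
     Delta (conjL L) \<in> G \<and> Circ (Imp (Neg \<psi>) (conjL L)) \<in> G"
proof (induct L)
  case Nil
  have "K4 (Delta top)" by (rule K4.R1, rule K4.A0) (simp add: tdefs)
  moreover have "K4 (Circ (Imp (Neg \<psi>) top))" by (rule K4.R2, rule K4.A0) (simp add: tdefs)
  ultimately show ?case using mcs_thm[OF m] by simp
next
  case (Cons x L)
  then have x: "Delta x \<in> G" "Circ (Imp (Neg \<psi>) x) \<in> G"
    and ih: "Delta (conjL L) \<in> G" "Circ (Imp (Neg \<psi>) (conjL L)) \<in> G" by auto
  have a4: "Imp (Nabla (Conj x (conjL L))) (Disj (Nabla x) (Nabla (conjL L))) \<in> G"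
    by (rule mcs_thm[OF m K4.A4])
  have "Delta (Conj x (conjL L)) \<in> G"
    by (rule mcs_taut[OF m, of "[Imp (Nabla (Conj x (conjL L))) (Disj (Nabla x) (Nabla (conjL L))), Delta x, Delta (conjL L)]"]) (use a4 x ih in \<open>auto simp: tdefs\<close>)
  moreover
  have a5: "Imp (Bullet (Conj (Imp (Neg \<psi>) x) (Imp (Neg \<psi>) (conjL L))))
     (Disj (Bullet (Imp (Neg \<psi>) x)) (Bullet (Imp (Neg \<psi>) (conjL L)))) \<in> G"
    by (rule mcs_thm[OF m K4.A5])
  have r4: "Iff (Circ (Conj (Imp (Neg \<psi>) x) (Imp (Neg \<psi>) (conjL L)))) (Circ (Imp (Neg \<psi>) (Conj x (conjL L)))) \<in> G"
    by (rule mcs_thm[OF m circ_eq]) (auto simp: tdefs)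
  have "Circ (Imp (Neg \<psi>) (conjL (x # L))) \<in> G"
    by (rule mcs_taut[OF m, of "[Imp (Bullet (Conj (Imp (Neg \<psi>) x) (Imp (Neg \<psi>) (conjL L))))
     (Disj (Bullet (Imp (Neg \<psi>) x)) (Bullet (Imp (Neg \<psi>) (conjL L)))), Iff (Circ (Conj (Imp (Neg \<psi>) x) (Imp (Neg \<psi>) (conjL L)))) (Circ (Imp (Neg \<psi>) (Conj x (conjL L)))), Circ (Imp (Neg \<psi>) x), Circ (Imp (Neg \<psi>) (conjL L))]"])
       (use a5 r4 x ih in \<open>auto simp: tdefs\<close>)
  ultimately show ?case by simp
qed

lemma succ_exists:
  assumes m: "mcs G" and b: "Bullet \<psi> \<in> G"
    and h: "\<And>a. Delta a \<in> G \<Longrightarrow> Circ (Imp (Neg \<psi>) a) \<in> G \<Longrightarrow> K4 (Neg (Conj c a)) \<Longrightarrow> False"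
  shows "\<exists>D. mcs D \<and> Rc G D \<and> c \<in> D"
proof -
  let ?X = "{a. Delta a \<in> G \<and> Circ (Imp (Neg \<psi>) a) \<in> G}"
  have "cons (insert c ?X)"
    unfolding cons_def
  proof
    assume "\<exists>L. set L \<subseteq> insert c ?X \<and> K4 (Neg (conjL L))"
    then obtain L where L: "set L \<subseteq> insert c ?X" "K4 (Neg (conjL L))" by blast
    define L1 where "L1 = filter (\<lambda>x. x \<noteq> c) L"
    have s1: "set L1 \<subseteq> ?X" using L(1) unfolding L1_def by auto
    have "K4 (Neg (Conj c (conjL L1)))"
      by (rule K4_taut[OF L(2)]) (use L(1) in \<open>auto simp: tdefs L1_def\<close>)
    with closure[OF m s1] h show False by blast
  qed
  then obtain D where "mcs D" "insert c ?X \<subseteq> D" using lindenbaum by blast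
  then show ?thesis unfolding Rc_def using b by blast
qed

lemma bullet_succ:
  assumes m: "mcs G" and b: "Bullet c \<in> G"
  shows "\<exists>D. mcs D \<and> Rc G D \<and> Neg c \<in> D"
proof (rule succ_exists[OF m b])
  fix a assume a: "Delta a \<in> G" "Circ (Imp (Neg c) a) \<in> G" "K4 (Neg (Conj (Neg c) a))"
  have "K4 (Iff (Circ (Imp (Neg c) a)) (Circ c))"
    by (rule K4.R4, rule K4_taut[OF a(3)]) (auto simp: tdefs)
  then have i: "Iff (Circ (Imp (Neg c) a)) (Circ c) \<in> G" by (rule mcs_thm[OF m])
  have "Circ c \<in> G" by (rule mcs_taut[OF m, of "[Iff (Circ (Imp (Neg c) a)) (Circ c), Circ (Imp (Neg c) a)]"]) (use a i in \<open>auto simp: tdefs\<close>)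
  then show False using b mcs_neg[OF m] unfolding Circ_def by blast
qed

lemma nabla_succ:
  assumes m: "mcs G" and b: "Bullet c \<in> G" and n: "Nabla c \<in> G"
  shows "\<exists>D. mcs D \<and> Rc G D \<and> c \<in> D"
proof (rule succ_exists[OF m b])
  fix a assume a: "Delta a \<in> G" "Circ (Imp (Neg c) a) \<in> G" "K4 (Neg (Conj c a))"
  let ?k = "Imp (Neg c) a"
  have c: "c \<in> G" by (rule mcs_taut[OF m, of "[Imp (Bullet c) c, Bullet c]"]) (use b mcs_thm[OF m K4.A1] in \<open>auto simp: tdefs\<close>)
  have "K4 (Iff (Delta c) (Delta (Conj ?k (Neg a))))"
    by (rule K4.R3, rule K4_taut[OF a(3)]) (auto simp: tdefs)
  then have t1: "Iff (Delta c) (Delta (Conj ?k (Neg a))) \<in> G" by (rule mcs_thm[OF m])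
  have t2: "Imp (Nabla (Conj ?k (Neg a))) (Disj (Nabla ?k) (Nabla (Neg a))) \<in> G" by (rule mcs_thm[OF m K4.A4])
  have t3: "Iff (Nabla a) (Nabla (Neg a)) \<in> G" by (rule mcs_thm[OF m K4.A2])
  have t4: "Imp (Nabla ?k) (Disj (Bullet ?k) (Bullet (Neg ?k))) \<in> G" by (rule mcs_thm[OF m K4.A6])
  have t5: "Imp (Bullet (Neg ?k)) (Neg ?k) \<in> G" by (rule mcs_thm[OF m K4.A1])
  have "Neg top \<in> G"
    by (rule mcs_taut[OF m, of "[Iff (Delta c) (Delta (Conj ?k (Neg a))), Imp (Nabla (Conj ?k (Neg a))) (Disj (Nabla ?k) (Nabla (Neg a))), Iff (Nabla a) (Nabla (Neg a)), Imp (Nabla ?k) (Disj (Bullet ?k) (Bullet (Neg ?k))), Imp (Bullet (Neg ?k)) (Neg ?k), Nabla c, Delta a, Circ ?k, c]"])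
       (use t1 t2 t3 t4 t5 a n c in \<open>auto simp: tdefs\<close>)
  moreover have "top \<in> G" by (rule mcs_thm[OF m], rule K4.A0) (simp add: tdefs)
  ultimately show False using mcs_neg[OF m] by blast
qed


lemma mcs_conj: "mcs M \<Longrightarrow> (Conj a b \<in> M) = (a \<in> M \<and> b \<in> M)"
proof -
  assume m: "mcs M"
  have 1: "Conj a b \<in> M \<Longrightarrow> a \<in> M" by (rule mcs_taut[OF m, of "[Conj a b]"]) (auto simp: tdefs)
  have 2: "Conj a b \<in> M \<Longrightarrow> b \<in> M" by (rule mcs_taut[OF m, of "[Conj a b]"]) (auto simp: tdefs)
  have 3: "a \<in> M \<Longrightarrow> b \<in> M \<Longrightarrow> Conj a b \<in> M" by (rule mcs_taut[OF m, of "[a, b]"]) (auto simp: tdefs)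
  show ?thesis using 1 2 3 by blast
qed

lemma mcs_disj: "mcs M \<Longrightarrow> (Disj a b \<in> M) = (a \<in> M \<or> b \<in> M)"
  unfolding Disj_def by (simp add: mcs_neg mcs_conj)

lemma top_in: "mcs G \<Longrightarrow> top \<in> G"
  by (rule mcs_thm, assumption, rule K4.A0) (simp add: tdefs)

lemma bullet_not:
  assumes m: "mcs G" and nb: "Bullet c \<notin> G" and c: "c \<in> G"
  shows "Delta c \<in> G \<and> Circ (Imp (Neg \<psi>) c) \<in> G"
proof
  have t1: "Imp (Nabla c) (Disj (Bullet c) (Bullet (Neg c))) \<in> G" by (rule mcs_thm[OF m K4.A6])
  have t2: "Imp (Bullet (Neg c)) (Neg c) \<in> G" by (rule mcs_thm[OF m K4.A1])
  have nb': "Neg (Bullet c) \<in> G" using nb mcs_neg[OF m] by blast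
  show "Delta c \<in> G"
    by (rule mcs_taut[OF m, of "[Imp (Nabla c) (Disj (Bullet c) (Bullet (Neg c))), Imp (Bullet (Neg c)) (Neg c), Neg (Bullet c), c]"])
      (use t1 t2 nb' c in \<open>auto simp: tdefs\<close>)
  have t3: "Imp (Conj (Bullet (Imp (Neg \<psi>) c)) c) (Bullet c) \<in> G" by (rule mcs_thm[OF m K4.A3])
  show "Circ (Imp (Neg \<psi>) c) \<in> G"
    by (rule mcs_taut[OF m, of "[Imp (Conj (Bullet (Imp (Neg \<psi>) c)) c) (Bullet c), Neg (Bullet c), c]"])
      (use t3 nb' c in \<open>auto simp: tdefs\<close>)
qed

lemma indep:
  assumes m: "mcs G" and b: "Bullet \<psi>1 \<in> G" and d: "Delta a \<in> G"
    and c: "Circ (Imp (Neg \<psi>1) a) \<in> G"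
  shows "Circ (Imp (Neg \<psi>2) a) \<in> G"
proof -
  have e1: "Iff (Circ \<psi>1) (Circ (Conj (Imp a \<psi>1) (Imp (Neg a) \<psi>1))) \<in> G"
    by (rule mcs_thm[OF m circ_eq]) (auto simp: tdefs)
  have e2: "Imp (Bullet (Conj (Imp a \<psi>1) (Imp (Neg a) \<psi>1))) (Disj (Bullet (Imp a \<psi>1)) (Bullet (Imp (Neg a) \<psi>1))) \<in> G"
    by (rule mcs_thm[OF m K4.A5])
  have e3: "Iff (Circ (Imp (Neg a) \<psi>1)) (Circ (Imp (Neg \<psi>1) a)) \<in> G"
    by (rule mcs_thm[OF m circ_eq]) (auto simp: tdefs)
  have e4: "Imp (Conj (Bullet (Imp a \<psi>1)) (Bullet (Imp (Neg a) \<psi>2))) (Nabla a) \<in> G"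
    by (rule mcs_thm[OF m K4.A7])
  have e5: "Iff (Circ (Imp (Neg a) \<psi>2)) (Circ (Imp (Neg \<psi>2) a)) \<in> G"
    by (rule mcs_thm[OF m circ_eq]) (auto simp: tdefs)
  show ?thesis
    by (rule mcs_taut[OF m, of "[Iff (Circ \<psi>1) (Circ (Conj (Imp a \<psi>1) (Imp (Neg a) \<psi>1))),
       Imp (Bullet (Conj (Imp a \<psi>1) (Imp (Neg a) \<psi>1))) (Disj (Bullet (Imp a \<psi>1)) (Bullet (Imp (Neg a) \<psi>1))),
       Iff (Circ (Imp (Neg a) \<psi>1)) (Circ (Imp (Neg \<psi>1) a)),
       Imp (Conj (Bullet (Imp a \<psi>1)) (Bullet (Imp (Neg a) \<psi>2))) (Nabla a),
       Iff (Circ (Imp (Neg a) \<psi>2)) (Circ (Imp (Neg \<psi>2) a)),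
       Bullet \<psi>1, Delta a, Circ (Imp (Neg \<psi>1) a)]"])
      (use e1 e2 e3 e4 e5 b d c in \<open>auto simp: tdefs\<close>)
qed

lemma delta_split:
  assumes m: "mcs G" and d: "Delta a \<in> G"
  shows "(Delta a \<in> G \<and> Circ (Imp (Neg \<psi>) a) \<in> G) \<or>
         (Delta (Neg a) \<in> G \<and> Circ (Imp (Neg \<psi>) (Neg a)) \<in> G)"
proof -
  have e1: "Imp (Conj (Bullet (Imp a \<psi>)) (Bullet (Imp (Neg a) \<psi>))) (Nabla a) \<in> G"
    by (rule mcs_thm[OF m K4.A7])
  have e2: "Iff (Circ (Imp a \<psi>)) (Circ (Imp (Neg \<psi>) (Neg a))) \<in> G"
    by (rule mcs_thm[OF m circ_eq]) (auto simp: tdefs)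
  have e3: "Iff (Circ (Imp (Neg a) \<psi>)) (Circ (Imp (Neg \<psi>) a)) \<in> G"
    by (rule mcs_thm[OF m circ_eq]) (auto simp: tdefs)
  have e4: "Iff (Nabla a) (Nabla (Neg a)) \<in> G" by (rule mcs_thm[OF m K4.A2])
  have "Disj (Conj (Delta a) (Circ (Imp (Neg \<psi>) a))) (Conj (Delta (Neg a)) (Circ (Imp (Neg \<psi>) (Neg a)))) \<in> G"
    by (rule mcs_taut[OF m, of "[Imp (Conj (Bullet (Imp a \<psi>)) (Bullet (Imp (Neg a) \<psi>))) (Nabla a),
       Iff (Circ (Imp a \<psi>)) (Circ (Imp (Neg \<psi>) (Neg a))), Iff (Circ (Imp (Neg a) \<psi>)) (Circ (Imp (Neg \<psi>) a)),
       Iff (Nabla a) (Nabla (Neg a)), Delta a]"])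
      (use e1 e2 e3 e4 d in \<open>auto simp: tdefs\<close>)
  then show ?thesis using mcs_conj[OF m] mcs_disj[OF m] by blast
qed


lemma Rc_trans:
  assumes mG: "mcs G" and mD: "mcs D" and GD: "Rc G D" and DE: "Rc D E"
  shows "Rc G E"
proof -
  obtain p1 where p1: "Bullet p1 \<in> G" "\<And>a. Delta a \<in> G \<Longrightarrow> Circ (Imp (Neg p1) a) \<in> G \<Longrightarrow> a \<in> D"
    using GD unfolding Rc_def by blast
  obtain p2 where p2: "Bullet p2 \<in> D" "\<And>a. Delta a \<in> D \<Longrightarrow> Circ (Imp (Neg p2) a) \<in> D \<Longrightarrow> a \<in> E"
    using DE unfolding Rc_def by blast
  have "a \<in> E" if a: "Delta a \<in> G" "Circ (Imp (Neg p1) a) \<in> G" for a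
  proof -
    have h: "Conj (Conj (Bullet p1) (Delta a)) (Circ (Imp (Neg p1) a)) \<in> G"
      using a p1(1) mcs_conj[OF mG] by simp
    have "Imp (Delta a) (Delta (Delta a)) \<in> G" by (rule mcs_thm[OF mG K4.A4_1])
    then have 1: "Delta (Delta a) \<in> G" using a(1) mcs_neg[OF mG] mcs_conj[OF mG] unfolding Imp_def by blast
    have "Imp (Delta a) (Circ (Imp (Neg p1) (Delta a))) \<in> G" by (rule mcs_thm[OF mG K4.A4_2])
    then have 2: "Circ (Imp (Neg p1) (Delta a)) \<in> G" using a(1) mcs_neg[OF mG] mcs_conj[OF mG] unfolding Imp_def by blast
    have dD: "Delta a \<in> D" using p1(2)[OF 1 2] .
    have "Imp (Conj (Conj (Bullet p1) (Delta a)) (Circ (Imp (Neg p1) a))) (Delta (Circ (Imp (Neg p2) a))) \<in> G"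
      by (rule mcs_thm[OF mG K4.A4_3])
    then have 3: "Delta (Circ (Imp (Neg p2) a)) \<in> G" using h mcs_neg[OF mG] mcs_conj[OF mG] unfolding Imp_def by blast
    have "Imp (Conj (Conj (Bullet p1) (Delta a)) (Circ (Imp (Neg p1) a))) (Circ (Imp (Neg p1) (Circ (Imp (Neg p2) a)))) \<in> G"
      by (rule mcs_thm[OF mG K4.A4_4])
    then have 4: "Circ (Imp (Neg p1) (Circ (Imp (Neg p2) a))) \<in> G" using h mcs_neg[OF mG] mcs_conj[OF mG] unfolding Imp_def by blast
    have "Circ (Imp (Neg p2) a) \<in> D" using p1(2)[OF 3 4] .
    then show "a \<in> E" using p2(2)[OF dD] by blast
  qed
  then show ?thesis unfolding Rc_def using p1(1) by blast
qed

definition CS :: "'p form set set set" where "CS = {{G} | G. mcs G}"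
definition CR :: "'p form set set \<Rightarrow> 'p form set set \<Rightarrow> bool" where
  "CR X Y \<longleftrightarrow> (\<exists>G D. X = {G} \<and> Y = {D} \<and> mcs G \<and> mcs D \<and> Rc G D)"
definition CV :: "'p \<Rightarrow> 'p form set set set" where
  "CV p = {{G} | G. mcs G \<and> Atom p \<in> G}"

lemma ex_CS: "(\<exists>t\<in>CS. P t) \<longleftrightarrow> (\<exists>D. mcs D \<and> P {D})"
  unfolding CS_def by auto

lemma CR_single: "CR {G} {D} \<longleftrightarrow> mcs G \<and> mcs D \<and> Rc G D"
  unfolding CR_def by auto

lemma truth: "mcs G \<Longrightarrow> sat CS CR CV {G} f \<longleftrightarrow> f \<in> G"
proof (induct f arbitrary: G)
  case (Atom p) then show ?case by (auto simp: CV_def)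
next
  case (Neg f) then show ?case by (simp add: mcs_neg)
next
  case (Conj f1 f2) then show ?case by (simp add: mcs_conj)
next
  case (Nabla f)
  note m = Nabla(2)
  have "sat CS CR CV {G} (Nabla f) \<longleftrightarrow>
     (\<exists>D1. mcs D1 \<and> (\<exists>D2. mcs D2 \<and> Rc G D1 \<and> Rc G D2 \<and> f \<in> D1 \<and> f \<notin> D2))"
    using Nabla(1) m by (auto simp add: ex_CS CR_single)
  also have "\<dots> \<longleftrightarrow> Nabla f \<in> G"
  proof
    assume "\<exists>D1. mcs D1 \<and> (\<exists>D2. mcs D2 \<and> Rc G D1 \<and> Rc G D2 \<and> f \<in> D1 \<and> f \<notin> D2)"
    then obtain D1 D2 where D: "mcs D1" "mcs D2" "Rc G D1" "Rc G D2" "f \<in> D1" "f \<notin> D2" by blast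
    show "Nabla f \<in> G"
    proof (rule ccontr)
      assume "Nabla f \<notin> G"
      then have d: "Delta f \<in> G" unfolding Delta_def using mcs_neg[OF m] by blast
      obtain p1 where p1: "Bullet p1 \<in> G" "\<And>a. Delta a \<in> G \<Longrightarrow> Circ (Imp (Neg p1) a) \<in> G \<Longrightarrow> a \<in> D1"
        using D(3) unfolding Rc_def by blast
      obtain p2 where p2: "\<And>a. Delta a \<in> G \<Longrightarrow> Circ (Imp (Neg p2) a) \<in> G \<Longrightarrow> a \<in> D2"
        using D(4) unfolding Rc_def by blast
      from delta_split[OF m d, of p1] show False
      proof
        assume h: "Delta f \<in> G \<and> Circ (Imp (Neg p1) f) \<in> G"
        then have "Circ (Imp (Neg p2) f) \<in> G" using indep[OF m p1(1)] by blast
        then show False using p2 h D(6) by blast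
      next
        assume h: "Delta (Neg f) \<in> G \<and> Circ (Imp (Neg p1) (Neg f)) \<in> G"
        then have "Circ (Imp (Neg p2) (Neg f)) \<in> G" using indep[OF m p1(1)] by blast
        then have "Neg f \<in> D1" "Neg f \<in> D2" using p1 p2 h by blast+
        then show False using D(1,5) mcs_neg by blast
      qed
    qed
  next
    assume n: "Nabla f \<in> G"
    have "Imp (Nabla f) (Disj (Bullet f) (Bullet (Neg f))) \<in> G" by (rule mcs_thm[OF m K4.A6])
    then have "Bullet f \<in> G \<or> Bullet (Neg f) \<in> G"
      using n mcs_neg[OF m] mcs_disj[OF m] unfolding Imp_def by (metis mcs_conj[OF m])
    then show "\<exists>D1. mcs D1 \<and> (\<exists>D2. mcs D2 \<and> Rc G D1 \<and> Rc G D2 \<and> f \<in> D1 \<and> f \<notin> D2)"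
    proof
      assume b: "Bullet f \<in> G"
      obtain D1 where "mcs D1" "Rc G D1" "f \<in> D1" using nabla_succ[OF m b n] by blast
      moreover obtain D2 where "mcs D2" "Rc G D2" "Neg f \<in> D2" using bullet_succ[OF m b] by blast
      ultimately show ?thesis using mcs_neg by blast
    next
      assume b: "Bullet (Neg f) \<in> G"
      have "Iff (Nabla f) (Nabla (Neg f)) \<in> G" by (rule mcs_thm[OF m K4.A2])
      then have n': "Nabla (Neg f) \<in> G" using n mcs_neg[OF m] mcs_conj[OF m] unfolding Iff_def Imp_def by blast
      obtain D2 where "mcs D2" "Rc G D2" "Neg f \<in> D2" using nabla_succ[OF m b n'] by blast
      moreover obtain D1 where "mcs D1" "Rc G D1" "Neg (Neg f) \<in> D1" using bullet_succ[OF m b] by blast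
      ultimately show ?thesis using mcs_neg by blast
    qed
  qed
  finally show ?case .
next
  case (Bullet f)
  note m = Bullet(2)
  have "sat CS CR CV {G} (Bullet f) \<longleftrightarrow>
     f \<in> G \<and> (\<exists>D. mcs D \<and> Rc G D \<and> f \<notin> D)"
    using Bullet(1) m by (auto simp: ex_CS CR_single)
  also have "\<dots> \<longleftrightarrow> Bullet f \<in> G"
  proof
    assume h: "f \<in> G \<and> (\<exists>D. mcs D \<and> Rc G D \<and> f \<notin> D)"
    then obtain D where D: "Rc G D" "f \<notin> D" by blast
    show "Bullet f \<in> G"
    proof (rule ccontr)
      assume nb: "Bullet f \<notin> G"
      obtain p where "\<And>a. Delta a \<in> G \<Longrightarrow> Circ (Imp (Neg p) a) \<in> G \<Longrightarrow> a \<in> D"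
        using D(1) unfolding Rc_def by blast
      then show False using bullet_not[OF m nb] h D(2) by blast
    qed
  next
    assume b: "Bullet f \<in> G"
    have "Imp (Bullet f) f \<in> G" by (rule mcs_thm[OF m K4.A1])
    then have "f \<in> G" using b mcs_neg[OF m] mcs_conj[OF m] unfolding Imp_def by blast
    moreover obtain D where "mcs D" "Rc G D" "Neg f \<in> D" using bullet_succ[OF m b] by blast
    ultimately show "f \<in> G \<and> (\<exists>D. mcs D \<and> Rc G D \<and> f \<notin> D)" using mcs_neg by blast
  qed
  finally show ?case .
qed

theorem theorem3:
  fixes G :: "'p form set" and phi :: "'p form"
  assumes "\<forall>(S :: 'p form set set set) R V s.
             is_model S R V \<and> transitive_rel S R \<and> s \<in> S \<and> (\<forall>g\<in>G. sat S R V s g)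
             \<longrightarrow> sat S R V s phi"
  shows "derives G phi"
proof (rule ccontr)
  assume nd: "\<not> derives G phi"
  have "cons (insert (Neg phi) G)"
    unfolding cons_def
  proof
    assume "\<exists>L. set L \<subseteq> insert (Neg phi) G \<and> K4 (Neg (conjL L))"
    then obtain L where L: "set L \<subseteq> insert (Neg phi) G" "K4 (Neg (conjL L))" by blast
    define L1 where "L1 = filter (\<lambda>x. x \<noteq> Neg phi) L"
    have s1: "set L1 \<subseteq> G" using L(1) unfolding L1_def by auto
    show False
    proof (cases L1)
      case Nil
      have "K4 phi" by (rule K4_taut[OF L(2)]) (use L(1) Nil in \<open>auto simp: tdefs L1_def filter_empty_conv\<close>)
      then show False using nd unfolding derives_def by blast
    next
      case (Cons g gs)
      have "K4 (Imp (fold (\<lambda>x y. Conj y x) gs g) phi)"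
        by (rule K4_taut[OF L(2)]) (use L(1) arg_cong[OF Cons[unfolded L1_def], of set] in \<open>auto simp: tdefs\<close>)
      then show False using nd s1 Cons unfolding derives_def by blast
    qed
  qed
  then obtain M where M: "mcs M" "insert (Neg phi) G \<subseteq> M" using lindenbaum by blast
  have sM: "{M} \<in> CS" using M(1) unfolding CS_def by auto
  have im: "is_model (CS :: 'p form set set set) CR CV" unfolding is_model_def
    using sM by (auto simp: CS_def CR_def CV_def)
  have tr: "transitive_rel (CS :: 'p form set set set) CR" unfolding transitive_rel_def
  proof (intro ballI impI)
    fix x y z :: "'p form set set" assume "CR x y" "CR y z"
    then obtain a b c where "x = {a}" "y = {b}" "z = {c}" "mcs a" "mcs b" "mcs c" "Rc a b" "Rc b c"
      unfolding CR_def by auto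
    then show "CR x z" unfolding CR_def using Rc_trans by blast
  qed
  have "\<forall>g\<in>G. sat CS CR CV {M} g" using truth[OF M(1)] M(2) by auto
  then have "sat CS CR CV {M} phi" using assms[rule_format, of CS CR CV "{M}"] im tr sM by simp
  then have "phi \<in> M" using truth[OF M(1)] by blast
  then show False using M mcs_neg by blast
qed

end
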